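(* Let $\mathcal G$ be an undirected graph on nodes $\{1,\dots,n\}$ with adjacency matrix $A=(a_{ij})$, and consider the networked SIR process on $\mathcal G$ with a given set of initially infected nodes. Let a budget $\bar C>0$, a level $\bar\lambda>0$, intervals $[\underline\beta_i,\bar\beta_i]\subset(0,\infty)$, $[\underline\delta_i,\bar\delta_i]\subset(0,\infty)$, and cost functions $f_i,g_i$ ($i=1,\dots,n$) be given, where each $f_i$ and each $g_i$ is a posynomial. Let $J,B,D$ be the $n\times n$ diagonal matrices with $J_{ii}=S_i(0)$, $B_{ii}=\beta_i$, $D_{ii}=\delta_i$. Suppose $\beta_1,\dots,\beta_n,\delta_1,\dots,\delta_n$ and an entrywise positive $v\in\mathbb R^n$ satisfy the (posynomial) constraints $$\sum_{i=1}^n\big(f_i(\delta_i)+g_i(\beta_i)\big)\le\bar C,\quad v^\top JBA+\mathbf 1_n^\top D<v^\top D,\quad v^\top I(0)<\bar\lambda+\sigma_I(0),$$ $$\underline\beta_i\le\beta_i\le\bar\beta_i,\quad \underline\delta_i\le\delta_i\le\bar\delta_i\quad(i=1,\dots,n).$$ Then these $\beta_i,\delta_i$ solve the resource allocation problem, i.e., $\beta_i\in[\underline\beta_i,\bar\beta_i]$, $\delta_i\in[\underline\delta_i,\bar\delta_i]$ for all $i$, $\sum_{i=1}^n(f_i(\delta_i)+g_i(\beta_i))\le\bar C$, and the SIR process with infection rates $\beta_i$ and recovery rates $\delta_i$ satisfies $\lambda\le\bar\lambda$.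
   Context: Networked SIR process with infection rates $\beta_i>0$ and recovery rates $\delta_i>0$: each node $i$ is at each time $t\ge0$ in exactly one of the states susceptible, infected, removed, encoded by $\{0,1\}$-valued $S_i(t),I_i(t),R_i(t)$. It is a continuous-time Markov process with $\Pr(I_i(t+h)=1\mid S_i(t)=1)=\beta_i\sum_{j}a_{ij}I_j(t)h+o(h)$ and $\Pr(R_i(t+h)=1\mid I_i(t)=1)=\delta_i h+o(h)$; removed nodes stay removed. At time $0$ each node is either susceptible or infected (known). $I(t)=[I_1(t),\dots,I_n(t)]^\top$; $\sigma_I(t),\sigma_R(t)$ are the numbers of infected and removed nodes at time $t$; $\lambda=\lim_{t\to\infty}E[\sigma_R(t)]-\sigma_I(0)$. A monomial in positive variables $x_1,\dots,x_m$ is $c x_1^{a_1}\cdots x_m^{a_m}$ with $c>0$, $a_k\in\mathbb R$; a posynomial is a finite sum of monomials. $\mathbf 1_n$ is the all-ones vector; vector inequalities are entrywise. *)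

theory Defs
  imports "HOL-Analysis.Analysis"
begin

datatype st = Sus | Inf | Rem

lemma UNIV_st: "(UNIV :: st set) = {Sus, Inf, Rem}"
  by (auto intro: st.exhaust)

instance st :: finite
  by standard (simp add: UNIV_st)

definition sir_rate ::
  "('n::finite \<Rightarrow> 'n \<Rightarrow> real) \<Rightarrow> ('n \<Rightarrow> real) \<Rightarrow> ('n \<Rightarrow> real) \<Rightarrow> ('n \<Rightarrow> st) \<Rightarrow> ('n \<Rightarrow> st) \<Rightarrow> real"
  where "sir_rate a \<beta> \<delta> x y =
    (\<Sum>i\<in>UNIV.
       (if x i = Sus \<and> y = x(i := Inf)
        then \<beta> i * (\<Sum>j\<in>UNIV. a i j * (if x j = Inf then 1 else 0)) else 0)
     + (if x i = Inf \<and> y = x(i := Rem) then \<delta> i else 0))"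

text \<open>p t y = probability that the process is in configuration y at time t, started
  deterministically in x0: the (unique) solution of the Kolmogorov forward equation.\<close>
definition sir_dist ::
  "('n::finite \<Rightarrow> 'n \<Rightarrow> real) \<Rightarrow> ('n \<Rightarrow> real) \<Rightarrow> ('n \<Rightarrow> real) \<Rightarrow> ('n \<Rightarrow> st)
    \<Rightarrow> (real \<Rightarrow> ('n \<Rightarrow> st) \<Rightarrow> real) \<Rightarrow> bool"
  where "sir_dist a \<beta> \<delta> x0 p \<longleftrightarrow>
    (\<forall>y. p 0 y = (if y = x0 then 1 else 0)) \<and>
    (\<forall>t\<ge>0. \<forall>y. ((\<lambda>s. p s y) has_real_derivative
        ((\<Sum>x\<in>UNIV. p t x * sir_rate a \<beta> \<delta> x y)
         - p t y * (\<Sum>z\<in>UNIV. sir_rate a \<beta> \<delta> y z))) (at t within {0..}))"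

definition count_st :: "st \<Rightarrow> ('n::finite \<Rightarrow> st) \<Rightarrow> real"
  where "count_st s x = real (card {i. x i = s})"

definition posynomial :: "(real \<Rightarrow> real) \<Rightarrow> bool"
  where "posynomial f \<longleftrightarrow>
    (\<exists>cs :: (real \<times> real) list. (\<forall>(c, e)\<in>set cs. c > 0) \<and>
       (\<forall>x>0. f x = (\<Sum>(c, e)\<leftarrow>cs. c * x powr e)))"

end

theory Submission
  imports Defs
begin

lemma mono_deriv:
  fixes F F' :: "real \<Rightarrow> real"
  assumes d: "\<And>t. t \<ge> 0 \<Longrightarrow> (F has_real_derivative F' t) (at t within {0..})"
    and nn: "\<And>t. t \<ge> 0 \<Longrightarrow> F' t \<ge> 0" and s: "0 \<le> s" "s \<le> t"
  shows "F s \<le> F t"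
proof -
  have "continuous_on {0..} F"
    unfolding continuous_on_eq_continuous_within using d DERIV_continuous by (metis atLeast_iff)
  then have c: "continuous_on {s..t} F"
    by (rule continuous_on_subset) (use s in auto)
  show ?thesis
  proof (rule DERIV_nonneg_imp_increasing_open[OF s(2) _ c])
    fix x assume x: "s < x" "x < t"
    then have "x \<in> interior {0::real..}" using s by simp
    then have "at x within {0..} = at x" by (rule at_within_interior)
    then show "\<exists>y. DERIV F x :> y \<and> 0 \<le> y"
      using d[of x] nn[of x] x s by auto
  qed
qed

lemma upd_sum:
  fixes \<psi> :: "'n::finite \<Rightarrow> 'b \<Rightarrow> real"
  shows "(\<Sum>k\<in>UNIV. \<psi> k ((x(i:=z)) k)) = (\<Sum>k\<in>UNIV. \<psi> k (x k)) + (\<psi> i z - \<psi> i (x i))"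
proof -
  have "(\<Sum>k\<in>UNIV. \<psi> k ((x(i:=z)) k)) = \<psi> i z + (\<Sum>k\<in>UNIV-{i}. \<psi> k ((x(i:=z)) k))"
    by (simp add: sum.remove[of UNIV i])
  also have "(\<Sum>k\<in>UNIV-{i}. \<psi> k ((x(i:=z)) k)) = (\<Sum>k\<in>UNIV-{i}. \<psi> k (x k))"
    by (rule sum.cong) auto
  also have "(\<Sum>k\<in>UNIV. \<psi> k (x k)) = \<psi> i (x i) + (\<Sum>k\<in>UNIV-{i}. \<psi> k (x k))"
    by (simp add: sum.remove[of UNIV i])
  ultimately show ?thesis by simp
qed

lemma upd_sum':
  fixes \<psi> :: "'n::finite \<Rightarrow> 'b \<Rightarrow> real"
  shows "(\<Sum>k\<in>UNIV. \<psi> k (if k = i then z else x k)) = (\<Sum>k\<in>UNIV. \<psi> k (x k)) + (\<psi> i z - \<psi> i (x i))"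
  using upd_sum[of \<psi> x i z] by simp

lemma gen_formula:
  fixes \<psi> :: "'n::finite \<Rightarrow> st \<Rightarrow> real"
  shows "(\<Sum>y\<in>UNIV. sir_rate a \<beta> \<delta> x y * ((\<Sum>k\<in>UNIV. \<psi> k (y k)) - (\<Sum>k\<in>UNIV. \<psi> k (x k))))
     = (\<Sum>i\<in>UNIV. (if x i = Sus then \<beta> i * (\<Sum>j\<in>UNIV. a i j * (if x j = Inf then 1 else 0)) * (\<psi> i Inf - \<psi> i Sus) else 0)
                 + (if x i = Inf then \<delta> i * (\<psi> i Rem - \<psi> i Inf) else 0))"
proof -
  have "(\<Sum>y\<in>UNIV. sir_rate a \<beta> \<delta> x y * ((\<Sum>k\<in>UNIV. \<psi> k (y k)) - (\<Sum>k\<in>UNIV. \<psi> k (x k))))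
     = (\<Sum>i\<in>UNIV. \<Sum>y\<in>UNIV.
       ((if x i = Sus \<and> y = x(i := Inf)
        then \<beta> i * (\<Sum>j\<in>UNIV. a i j * (if x j = Inf then 1 else 0)) else 0)
     + (if x i = Inf \<and> y = x(i := Rem) then \<delta> i else 0)) * ((\<Sum>k\<in>UNIV. \<psi> k (y k)) - (\<Sum>k\<in>UNIV. \<psi> k (x k))))"
    unfolding sir_rate_def sum_distrib_right by (rule sum.swap)
  also have "\<dots> = (\<Sum>i\<in>UNIV. (if x i = Sus then \<beta> i * (\<Sum>j\<in>UNIV. a i j * (if x j = Inf then 1 else 0)) * (\<psi> i Inf - \<psi> i Sus) else 0)
                 + (if x i = Inf then \<delta> i * (\<psi> i Rem - \<psi> i Inf) else 0))"
  proof (rule sum.cong[OF refl])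
    fix i
    have e: "\<And>P z c y. (if P \<and> y = z then c else (0::real)) = (if y = z then (if P then c else 0) else 0)" by auto
    show "(\<Sum>y\<in>UNIV.
       ((if x i = Sus \<and> y = x(i := Inf)
        then \<beta> i * (\<Sum>j\<in>UNIV. a i j * (if x j = Inf then 1 else 0)) else 0)
     + (if x i = Inf \<and> y = x(i := Rem) then \<delta> i else 0)) * ((\<Sum>k\<in>UNIV. \<psi> k (y k)) - (\<Sum>k\<in>UNIV. \<psi> k (x k))))
      = (if x i = Sus then \<beta> i * (\<Sum>j\<in>UNIV. a i j * (if x j = Inf then 1 else 0)) * (\<psi> i Inf - \<psi> i Sus) else 0)
                 + (if x i = Inf then \<delta> i * (\<psi> i Rem - \<psi> i Inf) else 0)"
      unfolding e distrib_right sum.distrib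
      by (simp add: upd_sum' if_distrib[of "\<lambda>u. u * _"] cong: if_cong)
  qed
  finally show ?thesis .
qed

lemma gen_swap:
  fixes p h :: "'m::finite \<Rightarrow> real" and r :: "'m \<Rightarrow> 'm \<Rightarrow> real"
  shows "(\<Sum>y\<in>UNIV. ((\<Sum>x\<in>UNIV. p x * r x y) - p y * (\<Sum>z\<in>UNIV. r y z)) * h y)
       = (\<Sum>x\<in>UNIV. p x * (\<Sum>y\<in>UNIV. r x y * (h y - h x)))"
proof -
  have L: "(\<Sum>y\<in>UNIV. ((\<Sum>x\<in>UNIV. p x * r x y) - p y * (\<Sum>z\<in>UNIV. r y z)) * h y)
     = (\<Sum>y\<in>UNIV. \<Sum>x\<in>UNIV. p x * r x y * h y) - (\<Sum>y\<in>UNIV. \<Sum>z\<in>UNIV. p y * r y z * h y)"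
    by (simp add: left_diff_distrib sum_subtractf sum_distrib_right sum_distrib_left mult.assoc)
  have R: "(\<Sum>x\<in>UNIV. p x * (\<Sum>y\<in>UNIV. r x y * (h y - h x)))
     = (\<Sum>x\<in>UNIV. \<Sum>y\<in>UNIV. p x * r x y * h y) - (\<Sum>x\<in>UNIV. \<Sum>y\<in>UNIV. p x * r x y * h x)"
    by (simp add: right_diff_distrib sum_subtractf sum_distrib_left mult.assoc)
  have S: "(\<Sum>y\<in>UNIV. \<Sum>x\<in>UNIV. p x * r x y * h y) = (\<Sum>x\<in>UNIV. \<Sum>y\<in>UNIV. p x * r x y * h y)"
    by (rule sum.swap)
  show ?thesis unfolding L R S by simp
qed

lemma E_deriv:
  assumes sd: "sir_dist a \<beta> \<delta> x0 p" and t: "t \<ge> 0"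
  shows "((\<lambda>s. \<Sum>y\<in>UNIV. p s y * h y) has_real_derivative
     (\<Sum>x\<in>UNIV. p t x * (\<Sum>y\<in>UNIV. sir_rate a \<beta> \<delta> x y * (h y - h x)))) (at t within {0..})"
proof -
  have "((\<lambda>s. \<Sum>y\<in>UNIV. p s y * h y) has_real_derivative
     (\<Sum>y\<in>UNIV. ((\<Sum>x\<in>UNIV. p t x * sir_rate a \<beta> \<delta> x y)
         - p t y * (\<Sum>z\<in>UNIV. sir_rate a \<beta> \<delta> y z)) * h y)) (at t within {0..})"
    using sd t unfolding sir_dist_def by (intro DERIV_sum DERIV_cmult_right) auto
  then show ?thesis by (simp only: gen_swap)
qed

lemma p_nonneg:
  fixes \<mu> :: "('n::finite \<Rightarrow> st) \<Rightarrow> nat"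
  assumes sd: "sir_dist a \<beta> \<delta> x0 p"
    and rnn: "\<And>x y. sir_rate a \<beta> \<delta> x y \<ge> 0"
    and dec: "\<And>x y. sir_rate a \<beta> \<delta> x y \<noteq> 0 \<Longrightarrow> \<mu> x < \<mu> y"
  shows "\<forall>t\<ge>0. p t y \<ge> 0"
proof (induction y rule: measure_induct_rule[of \<mu>])
  case (less y)
  define c where "c = (\<Sum>z\<in>UNIV. sir_rate a \<beta> \<delta> y z)"
  define g where "g t = (\<Sum>x\<in>UNIV. p t x * sir_rate a \<beta> \<delta> x y)" for t
  have gnn: "g t \<ge> 0" if "t \<ge> 0" for t
    unfolding g_def
  proof (rule sum_nonneg)
    fix x
    show "0 \<le> p t x * sir_rate a \<beta> \<delta> x y"
    proof (cases "sir_rate a \<beta> \<delta> x y = 0")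
      case False
      then have "p t x \<ge> 0" using less[OF dec[OF False]] that by blast
      then show ?thesis using rnn by simp
    qed simp
  qed
  have D: "((\<lambda>s. exp(c * s) * p s y) has_real_derivative (exp(c * t) * g t)) (at t within {0..})"
    if t: "t \<ge> 0" for t
  proof -
    have e: "((\<lambda>s. exp(c * s)) has_real_derivative (exp(c * t)*c)) (at t within {0..})"
      by (auto intro!: derivative_eq_intros)
    have pp: "((\<lambda>s. p s y) has_real_derivative (g t - p t y * c)) (at t within {0..})"
      using sd t unfolding sir_dist_def g_def c_def by blast
    have "((\<lambda>s. exp(c * s) * p s y) has_real_derivative (exp(c * t)*c * p t y + (g t - p t y * c) * exp(c * t))) (at t within {0..})"
      by (rule DERIV_mult[OF e pp])
    moreover have "exp(c * t)*c * p t y + (g t - p t y * c) * exp(c * t) = exp(c * t) * g t"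
      by (simp add: algebra_simps)
    ultimately show ?thesis by (rule DERIV_cong)
  qed
  show ?case
  proof (intro allI impI)
    fix t :: real assume t: "t \<ge> 0"
    have "exp(c * 0) * p 0 y \<le> exp(c * t) * p t y"
      by (rule mono_deriv[OF D _ order_refl t]) (use gnn in auto)
    moreover have "p 0 y \<ge> 0" using sd unfolding sir_dist_def by simp
    ultimately have "0 \<le> exp(c * t) * p t y" by simp
    then show "0 \<le> p t y" by (simp add: zero_le_mult_iff)
  qed
qed

theorem theorem1:
  fixes a :: "'n::finite \<Rightarrow> 'n \<Rightarrow> real"
    and x0 :: "'n \<Rightarrow> st"
    and Cbar lbar :: real
    and blo bhi dlo dhi \<beta> \<delta> v :: "'n \<Rightarrow> real"
    and f g :: "'n \<Rightarrow> real \<Rightarrow> real"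
  assumes graph01: "\<And>i j. a i j \<in> {0, 1}"
    and graph_sym: "\<And>i j. a i j = a j i"
    and graph_loop: "\<And>i. a i i = 0"
    and init: "\<And>i. x0 i \<in> {Sus, Inf}"
    and Cbar_pos: "Cbar > 0"
    and lbar_pos: "lbar > 0"
    and blo_pos: "\<And>i. 0 < blo i" and bhi: "\<And>i. blo i \<le> bhi i"
    and dlo_pos: "\<And>i. 0 < dlo i" and dhi: "\<And>i. dlo i \<le> dhi i"
    and f_posy: "\<And>i. posynomial (f i)"
    and g_posy: "\<And>i. posynomial (g i)"
    and v_pos: "\<And>i. v i > 0"
    and budget: "(\<Sum>i\<in>UNIV. f i (\<delta> i) + g i (\<beta> i)) \<le> Cbar"
    and spectral: "\<And>k. (\<Sum>i\<in>UNIV. v i * (if x0 i = Sus then 1 else 0) * \<beta> i * a i k) + \<delta> k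
                        < v k * \<delta> k"
    and init_bound: "(\<Sum>i\<in>UNIV. v i * (if x0 i = Inf then 1 else 0)) < lbar + count_st Inf x0"
    and b_bounds: "\<And>i. blo i \<le> \<beta> i \<and> \<beta> i \<le> bhi i"
    and d_bounds: "\<And>i. dlo i \<le> \<delta> i \<and> \<delta> i \<le> dhi i"
  shows "(\<forall>i. blo i \<le> \<beta> i \<and> \<beta> i \<le> bhi i) \<and>
         (\<forall>i. dlo i \<le> \<delta> i \<and> \<delta> i \<le> dhi i) \<and>
         (\<Sum>i\<in>UNIV. f i (\<delta> i) + g i (\<beta> i)) \<le> Cbar \<and>
         (\<forall>p. sir_dist a \<beta> \<delta> x0 p \<longrightarrow>
            (\<exists>L. ((\<lambda>t. \<Sum>y\<in>UNIV. p t y * count_st Rem y) \<longlongrightarrow> L) at_top \<and>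
                 L - count_st Inf x0 \<le> lbar))"
proof -
  let ?r = "sir_rate a \<beta> \<delta>"
  have ann: "a i j \<ge> 0" for i j using graph01[of i j] by auto
  have bpos: "\<beta> i > 0" for i using blo_pos[of i] b_bounds[of i] by linarith
  have dpos: "\<delta> i > 0" for i using dlo_pos[of i] d_bounds[of i] by linarith
  have rnn: "?r x y \<ge> 0" for x y
    unfolding sir_rate_def
    by (intro sum_nonneg add_nonneg_nonneg) (auto intro!: mult_nonneg_nonneg sum_nonneg ann less_imp_le[OF bpos] less_imp_le[OF dpos])
  define w :: "st \<Rightarrow> nat" where "w s = (case s of Sus \<Rightarrow> 0 | st.Inf \<Rightarrow> 1 | Rem \<Rightarrow> 2)" for s
  define \<mu> :: "('n \<Rightarrow> st) \<Rightarrow> nat" where "\<mu> y = (\<Sum>k\<in>UNIV. w (y k))" for y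
  have muR: "real (\<mu> y) = (\<Sum>k\<in>UNIV. real (w (y k)))" for y unfolding \<mu>_def by simp
  have dec: "\<mu> x < \<mu> y" if ne: "?r x y \<noteq> 0" for x y
  proof -
    obtain i where i: "(if x i = Sus \<and> y = x(i := st.Inf)
        then \<beta> i * (\<Sum>j\<in>UNIV. a i j * (if x j = st.Inf then 1 else 0)) else 0)
     + (if x i = st.Inf \<and> y = x(i := Rem) then \<delta> i else 0) \<noteq> 0"
      using ne unfolding sir_rate_def by (meson sum.neutral)
    then have "(x i = Sus \<and> y = x(i := st.Inf)) \<or> (x i = st.Inf \<and> y = x(i := Rem))"
      by (auto split: if_splits)
    then have "real (\<mu> y) > real (\<mu> x)"
      unfolding muR using upd_sum[of "\<lambda>k s. real (w s)" x i] by (auto simp: w_def)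
    then show ?thesis by simp
  qed
  have cnt: "count_st s y = (\<Sum>k\<in>UNIV. if y k = s then 1 else 0)" for s and y :: "'n \<Rightarrow> st"
    unfolding count_st_def by (simp add: sum.If_cases)
  define c where "c k = (if x0 k = Sus then 0 else v k)" for k
  define \<psi> where "\<psi> k s = (case s of Sus \<Rightarrow> c k | st.Inf \<Rightarrow> v k | Rem \<Rightarrow> 1)" for k s
  define \<Phi> where "\<Phi> y = (\<Sum>k\<in>UNIV. \<psi> k (y k))" for y
  have cnn: "c k \<ge> 0" for k unfolding c_def using v_pos[of k] by auto
  have RPhi: "count_st Rem y \<le> \<Phi> y" for y
    unfolding cnt \<Phi>_def
    by (rule sum_mono) (auto simp: \<psi>_def cnn less_imp_le[OF v_pos] split: st.splits)
  have genR: "(\<Sum>y\<in>UNIV. ?r x y * (count_st Rem y - count_st Rem x)) \<ge> 0" for x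
  proof -
    have "(\<Sum>y\<in>UNIV. ?r x y * (count_st Rem y - count_st Rem x))
       = (\<Sum>i\<in>UNIV. (if x i = Sus then \<beta> i * (\<Sum>j\<in>UNIV. a i j * (if x j = st.Inf then 1 else 0)) * ((\<lambda>k s. if s = Rem then 1 else 0) i st.Inf - (\<lambda>k s. if s = Rem then 1 else 0) i Sus) else 0)
                 + (if x i = st.Inf then \<delta> i * ((\<lambda>k s. if s = Rem then 1 else (0::real)) i Rem - (\<lambda>k s. if s = Rem then 1 else 0) i st.Inf) else 0))"
      unfolding cnt by (rule gen_formula)
    also have "\<dots> \<ge> 0" by (intro sum_nonneg) (auto intro: less_imp_le[OF dpos])
    finally show ?thesis .
  qed
  define s0 where "s0 i = (if x0 i = Sus then 1 else (0::real))" for i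
  have genPhi: "(\<Sum>y\<in>UNIV. ?r x y * (\<Phi> y - \<Phi> x)) \<le> 0" for x
  proof -
    have "(\<Sum>y\<in>UNIV. ?r x y * (\<Phi> y - \<Phi> x))
       = (\<Sum>i\<in>UNIV. (if x i = Sus then \<beta> i * (\<Sum>j\<in>UNIV. a i j * (if x j = st.Inf then 1 else 0)) * (\<psi> i st.Inf - \<psi> i Sus) else 0)
                 + (if x i = st.Inf then \<delta> i * (\<psi> i Rem - \<psi> i st.Inf) else 0))"
      unfolding \<Phi>_def by (rule gen_formula)
    also have "\<dots> = (\<Sum>i\<in>UNIV. (if x i = Sus then \<beta> i * (\<Sum>j\<in>UNIV. a i j * (if x j = st.Inf then 1 else 0)) * (v i * s0 i) else 0))
                 + (\<Sum>i\<in>UNIV. (if x i = st.Inf then \<delta> i * (1 - v i) else 0))"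
    proof -
      have e1: "\<psi> i st.Inf - \<psi> i Sus = v i * s0 i" for i
        unfolding \<psi>_def c_def s0_def by simp
      have e2: "\<psi> i Rem - \<psi> i st.Inf = 1 - v i" for i
        unfolding \<psi>_def by simp
      show ?thesis unfolding e1 e2 sum.distrib ..
    qed
    also have "(\<Sum>i\<in>UNIV. (if x i = Sus then \<beta> i * (\<Sum>j\<in>UNIV. a i j * (if x j = st.Inf then 1 else 0)) * (v i * s0 i) else 0))
       \<le> (\<Sum>i\<in>UNIV. \<Sum>j\<in>UNIV. (if x j = st.Inf then 1 else 0) * (v i * s0 i * \<beta> i * a i j))"
    proof (rule sum_mono)
      fix i
      have eq: "\<beta> i * (\<Sum>j\<in>UNIV. a i j * (if x j = st.Inf then 1 else 0)) * (v i * s0 i)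
          = (\<Sum>j\<in>UNIV. (if x j = st.Inf then 1 else 0) * (v i * s0 i * \<beta> i * a i j))"
        by (simp add: sum_distrib_left sum_distrib_right mult_ac)
      have nn: "0 \<le> (\<Sum>j\<in>UNIV. (if x j = st.Inf then 1 else 0) * (v i * s0 i * \<beta> i * a i j))"
        by (intro sum_nonneg) (auto simp: s0_def intro!: mult_nonneg_nonneg ann less_imp_le[OF bpos] less_imp_le[OF v_pos])
      show "(if x i = Sus then \<beta> i * (\<Sum>j\<in>UNIV. a i j * (if x j = st.Inf then 1 else 0)) * (v i * s0 i) else 0)
        \<le> (\<Sum>j\<in>UNIV. (if x j = st.Inf then 1 else 0) * (v i * s0 i * \<beta> i * a i j))"
        using eq nn by auto
    qed
    also have "(\<Sum>i\<in>UNIV. \<Sum>j\<in>UNIV. (if x j = st.Inf then 1 else 0) * (v i * s0 i * \<beta> i * a i j))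
        = (\<Sum>j\<in>UNIV. (if x j = st.Inf then 1 else 0) * (\<Sum>i\<in>UNIV. v i * s0 i * \<beta> i * a i j))"
      by (subst sum.swap) (simp add: sum_distrib_left)
    finally have "(\<Sum>y\<in>UNIV. ?r x y * (\<Phi> y - \<Phi> x))
       \<le> (\<Sum>j\<in>UNIV. (if x j = st.Inf then 1 else 0) * (\<Sum>i\<in>UNIV. v i * s0 i * \<beta> i * a i j))
         + (\<Sum>j\<in>UNIV. (if x j = st.Inf then \<delta> j * (1 - v j) else 0))" by simp
    also have "\<dots> = (\<Sum>j\<in>UNIV. (if x j = st.Inf then 1 else 0) * ((\<Sum>i\<in>UNIV. v i * s0 i * \<beta> i * a i j) + \<delta> j - v j * \<delta> j))"
      by (simp add: sum.distrib[symmetric]) (rule sum.cong, auto simp: algebra_simps)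
    also have "\<dots> \<le> 0"
      using spectral unfolding s0_def by (intro sum_nonpos) (auto intro: less_imp_le)
    finally show ?thesis .
  qed
  have last: "\<forall>p. sir_dist a \<beta> \<delta> x0 p \<longrightarrow>
            (\<exists>L. ((\<lambda>t. \<Sum>y\<in>UNIV. p t y * count_st Rem y) \<longlongrightarrow> L) at_top \<and>
                 L - count_st Inf x0 \<le> lbar)"
  proof (intro allI impI)
    fix p assume sd: "sir_dist a \<beta> \<delta> x0 p"
    have pnn: "\<And>t. t \<ge> 0 \<Longrightarrow> p t y \<ge> 0" for y
      using p_nonneg[of a \<beta> \<delta> x0 p \<mu>, OF sd rnn dec] by blast
    define ER where "ER t = (\<Sum>y\<in>UNIV. p t y * count_st Rem y)" for t
    define EP where "EP t = (\<Sum>y\<in>UNIV. p t y * \<Phi> y)" for t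
    have ERmono: "ER s \<le> ER t" if "0 \<le> s" "s \<le> t" for s t
      unfolding ER_def
      by (rule mono_deriv[OF E_deriv[OF sd] _ that])
         (auto intro!: sum_nonneg mult_nonneg_nonneg pnn genR)
    have EPmono: "- EP s \<le> - EP t" if "0 \<le> s" "s \<le> t" for s t
      unfolding EP_def
      by (rule mono_deriv[OF DERIV_minus[OF E_deriv[OF sd]] _ that])
         (auto intro!: sum_nonneg mult_nonneg_nonpos pnn genPhi simp: sum_negf[symmetric])
    have EP0: "EP 0 = \<Phi> x0"
    proof -
      have "p 0 y = (if y = x0 then 1 else 0)" for y using sd unfolding sir_dist_def by blast
      then have "(\<Sum>y\<in>UNIV. p 0 y * \<Phi> y) = (\<Sum>y\<in>UNIV. if y = x0 then \<Phi> y else 0)"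
        by (intro sum.cong) auto
      then show ?thesis unfolding EP_def by simp
    qed
    have Phix0: "\<Phi> x0 = (\<Sum>i\<in>UNIV. v i * (if x0 i = st.Inf then 1 else 0))"
      unfolding \<Phi>_def
    proof (rule sum.cong[OF refl])
      fix k show "\<psi> k (x0 k) = v k * (if x0 k = st.Inf then 1 else 0)"
        using init[of k] by (auto simp: \<psi>_def c_def)
    qed
    have ERle: "ER t \<le> EP t" if "t \<ge> 0" for t
      unfolding ER_def EP_def
      by (rule sum_mono) (intro mult_left_mono RPhi pnn that)
    define M where "M = \<Phi> x0"
    have bnd: "ER t \<le> M" if "t \<ge> 0" for t
      using ERle[OF that] EPmono[OF order_refl that] EP0 unfolding M_def by simp
    define L where "L = Sup (ER ` {0..})"
    have bdd: "bdd_above (ER ` {0..})" using bnd by (intro bdd_aboveI[of _ M]) auto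
    have ERL: "ER t \<le> L" if "t \<ge> 0" for t
      unfolding L_def using bdd that by (auto intro: cSup_upper)
    have LM: "L \<le> M"
      unfolding L_def by (rule cSup_least) (use bnd in auto)
    have lim: "(ER \<longlongrightarrow> L) at_top"
    proof (rule order_tendstoI)
      fix y assume "y < L"
      then obtain t0 where t0: "t0 \<ge> 0" "y < ER t0"
        unfolding L_def using less_cSup_iff[of "ER ` {0..}" y] bdd by auto
      show "\<forall>\<^sub>F t in at_top. y < ER t"
        using eventually_ge_at_top[of t0]
        by eventually_elim (use ERmono t0 in fastforce)
    next
      fix y assume "y > L"
      show "\<forall>\<^sub>F t in at_top. ER t < y"
        using eventually_ge_at_top[of 0]
        by eventually_elim (use ERL \<open>y > L\<close> in fastforce)
    qed
    show "\<exists>L. ((\<lambda>t. \<Sum>y\<in>UNIV. p t y * count_st Rem y) \<longlongrightarrow> L) at_top \<and> L - count_st st.Inf x0 \<le> lbar"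
    proof (intro exI conjI)
      show "((\<lambda>t. \<Sum>y\<in>UNIV. p t y * count_st Rem y) \<longlongrightarrow> L) at_top"
        using lim unfolding ER_def by simp
      show "L - count_st st.Inf x0 \<le> lbar"
        using LM init_bound Phix0 unfolding M_def by linarith
    qed
  qed
  show ?thesis using b_bounds d_bounds budget last by blast
qed

end
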